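(* Let $n$ be a positive integer and let $x$ be a complex number such that no denominator below vanishes. Then \[ \sum_{k=0}^{n}(-1)^k\binom{n}{k}\frac{\binom{2x+k}{k}}{\binom{2x+n+k}{k}}H_{k}(x) =4^{n-1}\frac{\binom{n-\frac{1}{2}}{n}}{\binom{2x+2n}{n}}\big\{H_n(x)+H_n-2H_{2n}\big\} -\frac{4^{n-1}}{n}\frac{\binom{x+n-\frac{1}{2}}{n}}{\binom{2x+2n}{n}\binom{x+n}{n}}. \]
   Context: For complex $z$ and a nonnegative integer $k$, $\binom{z}{k}=\frac{z(z-1)\cdots(z-k+1)}{k!}$ (with $\binom{z}{0}=1$). For complex $x$ and nonnegative integer $m$, $H_0(x)=0$ and $H_m(x)=\sum_{j=1}^m\frac{1}{x+j}$; $H_m=H_m(0)=\sum_{j=1}^m\frac1j$. The parameter $x$ is assumed to be such that all denominators are nonzero. *)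

theory Defs
  imports Complex_Main
begin

definition Hx :: "complex \<Rightarrow> nat \<Rightarrow> complex" where
  "Hx x m = (\<Sum>j=1..m. 1 / (x + of_nat j))"

end

theory Submission imports Defs begin

definition gen :: "complex \<Rightarrow> bool" where "gen x \<longleftrightarrow> (\<forall>m::int. 2*x \<noteq> of_int m)"

lemma gen_nz2: assumes "gen x" shows "2*x + of_nat m \<noteq> 0"
proof
  assume "2*x + of_nat m = 0"
  then have "2*x = of_int (- int m)" by (simp add: eq_neg_iff_add_eq_0)
  with assms show False unfolding gen_def by blast
qed

lemma gen_nz1: assumes "gen x" shows "x + of_nat m \<noteq> 0"
proof
  assume "x + of_nat m = 0"
  moreover have "2*x + of_nat (2*m) = 2*(x + of_nat m)" by (simp add: algebra_simps)
  ultimately have "2*x + of_nat (2*m) = 0" by simp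
  with gen_nz2[OF assms] show False by blast
qed

lemma gen_poch: assumes "gen x" "\<And>j. a + of_nat j = 2*x + of_nat (c + j)" shows "pochhammer a k \<noteq> 0"
proof
  assume "pochhammer a k = 0"
  then obtain j where "a = - of_nat j" using pochhammer_eq_0_iff[of a k] by blast
  then have "a + of_nat j = 0" by simp
  with assms(2)[of j] gen_nz2[OF assms(1), of "c+j"] show False by simp
qed

lemma poch1_nz: "gen x \<Longrightarrow> pochhammer (2*x+1) k \<noteq> 0"
  by (rule gen_poch[where c=1]) (auto simp: algebra_simps)

lemma pochN_nz: "gen x \<Longrightarrow> pochhammer (2*x + of_nat N + 1) k \<noteq> 0"
  by (rule gen_poch[where c="N+1"]) (auto simp: algebra_simps)

lemma aux_k:
  fixes P1 PN e t C D c a :: complex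
  assumes "PN \<noteq> 0" "e \<noteq> 0" "a*c = D*C"
  shows "(-1)^(Suc k) * c * (P1 * t) / (PN * e) * (a * e) = - ((-1)^k * C * P1 / PN) * (D * t)"
proof -
  have "(-1)^(Suc k) * c * (P1 * t) / (PN * e) * (a * e) = -((-1)^k * (a*c) * P1 * t / PN)"
    using assms by (simp add: field_simps)
  also have "\<dots> = - ((-1)^k * C * P1 / PN) * (D * t)" unfolding assms(3) by (simp add: field_simps)
  finally show ?thesis .
qed
lemma aux_N:
  fixes P1 PN PM e t C D c a M f :: complex
  assumes "PN \<noteq> 0" "e \<noteq> 0" "f \<noteq> 0" "PM = f * PN / e" "D*c = a*C"
  shows "(-1)^k * C * P1 / PM * (a * f) = (-1)^k * c * P1 / PN * (D * e)"
proof -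
  have "(-1)^k * C * P1 / PM * (a * f) = (-1)^k * (a*C) * P1 * e / PN"
    unfolding assms(4) using assms(1-3) by (simp add: field_simps)
  also have "\<dots> = (-1)^k * c * P1 / PN * (D * e)" unfolding assms(5)[symmetric] using assms by (simp add: field_simps)
  finally show ?thesis .
qed

definition cc :: "complex \<Rightarrow> nat \<Rightarrow> nat \<Rightarrow> complex" where
  "cc x N k = (-1)^k * of_nat (N choose k) * pochhammer (2*x+1) k / pochhammer (2*x + of_nat N + 1) k"

lemma cc_gt: "N < k \<Longrightarrow> cc x N k = 0"
  by (simp add: cc_def binomial_eq_0)

lemma poch_shift: "pochhammer a k * (a + of_nat k) = a * pochhammer (a + 1) k"
  by (metis pochhammer_Suc pochhammer_rec)

lemma cc_shift_k:
  assumes g: "gen x" and k: "k \<le> N"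
  shows "cc x N (Suc k) * (of_nat (Suc k) * (2*x + of_nat N + 1 + of_nat k))
       = - cc x N k * ((of_nat N - of_nat k) * (2*x + 1 + of_nat k))"
proof (cases "k = N")
  case True then show ?thesis by (simp add: cc_gt)
next
  case False
  with k have kN: "k < N" by simp
  have b: "Suc k * (N choose Suc k) = (N - k) * (N choose k)"
    by (simp only: binomial_absorption binomial_absorb_comp)
  have b0: "(of_nat (Suc k) :: complex) * of_nat (N choose Suc k) = of_nat (N - k) * of_nat (N choose k)"
    by (simp only: of_nat_mult[symmetric] b)
  have b': "of_nat (Suc k) * of_nat (N choose Suc k) = (of_nat N - of_nat k) * (of_nat (N choose k) :: complex)"
    using b0 by (simp only: of_nat_diff[OF less_imp_le[OF kN]])
  have n1: "pochhammer (2*x+1) k \<noteq> 0" using poch1_nz[OF g] .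
  have n2: "pochhammer (2*x + of_nat N + 1) k \<noteq> 0" using pochN_nz[OF g] .
  have n3: "2*x + of_nat N + 1 + of_nat k \<noteq> 0" using gen_nz2[OF g, of "N+1+k"] by (simp add: algebra_simps)
  show ?thesis unfolding cc_def pochhammer_Suc
    by (rule aux_k[OF n2 n3 b'])
qed

lemma cc_shift_N:
  assumes g: "gen x"
  shows "cc x n k * (of_nat (Suc n) * (2*x + of_nat (Suc n)))
       = cc x (Suc n) k * ((of_nat (Suc n) - of_nat k) * (2*x + of_nat (Suc n) + of_nat k))"
proof -
  consider "Suc n < k" | "k = Suc n" | "k \<le> n" by linarith
  then show ?thesis
  proof cases
    case 1 then show ?thesis by (simp add: cc_gt)
  next
    case 2 then show ?thesis by (simp add: cc_gt)
  next
    case 3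
    have b: "(Suc n - k) * (Suc n choose k) = Suc n * (n choose k)"
      using binomial_absorb_comp[of "Suc n" k] by simp
    have b0: "(of_nat (Suc n - k) :: complex) * of_nat (Suc n choose k) = of_nat (Suc n) * of_nat (n choose k)"
      by (simp only: of_nat_mult[symmetric] b)
    have b': "(of_nat (Suc n) - of_nat k) * of_nat (Suc n choose k) = of_nat (Suc n) * (of_nat (n choose k) :: complex)"
      using b0 by (simp only: of_nat_diff[OF le_SucI[OF 3]])
    have ps: "pochhammer (2*x + of_nat n + 1) k * (2*x + of_nat n + 1 + of_nat k)
        = (2*x + of_nat n + 1) * pochhammer (2*x + of_nat (Suc n) + 1) k"
      using poch_shift[of "2*x + of_nat n + 1" k] by (simp add: algebra_simps)
    have n1: "pochhammer (2*x + of_nat n + 1) k \<noteq> 0" using pochN_nz[OF g] .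
    have n2: "pochhammer (2*x + of_nat (Suc n) + 1) k \<noteq> 0" using pochN_nz[OF g] .
    have n3: "2*x + of_nat n + 1 \<noteq> 0" using gen_nz2[OF g, of "n+1"] by (simp add: algebra_simps)
    have eq: "pochhammer (2*x + of_nat n + 1) k = (2*x + of_nat n + 1) * pochhammer (2*x + of_nat (Suc n) + 1) k / (2*x + of_nat n + 1 + of_nat k)"
      using ps gen_nz2[OF g, of "n+1+k"] by (simp add: field_simps)
    have e0: "2*x + of_nat n + 1 + of_nat k \<noteq> 0" using gen_nz2[OF g, of "n+1+k"] by (simp add: algebra_simps)
    have f: "2*x + of_nat (Suc n) = 2*x + of_nat n + 1" by simp
    have e: "2*x + of_nat (Suc n) + of_nat k = 2*x + of_nat n + 1 + of_nat k" by simp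
    show ?thesis unfolding cc_def f e
      by (rule aux_N[OF n2[unfolded f] e0 n3 eq[unfolded f] b'])
  qed
qed

lemma Hx_Suc: "Hx x (Suc k) = Hx x k + 1 / (x + of_nat (Suc k))"
  unfolding Hx_def by (simp add: sum.cl_ivl_Suc)

lemma Hx_0 [simp]: "Hx x 0 = 0"
  unfolding Hx_def by simp

lemma tele_pt:
  assumes g: "gen x" and k: "k \<le> N"
  shows "cc x N k * (-(of_nat N - of_nat k)*(2*x+1+of_nat k)*g (Suc k) - of_nat k*(2*x+of_nat N+of_nat k)*g k)
    = cc x N (Suc k) * (of_nat (Suc k) * (2*x + of_nat N + of_nat (Suc k)) * g (Suc k))
      - cc x N k * (of_nat k * (2*x + of_nat N + of_nat k) * g k)"
proof -
  have "cc x N (Suc k) * (of_nat (Suc k) * (2*x + of_nat N + of_nat (Suc k)) * g (Suc k))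
      = (cc x N (Suc k) * (of_nat (Suc k) * (2*x + of_nat N + 1 + of_nat k))) * g (Suc k)"
    by (simp add: algebra_simps)
  also have "\<dots> = - cc x N k * ((of_nat N - of_nat k) * (2*x + 1 + of_nat k)) * g (Suc k)"
    by (simp only: cc_shift_k[OF g k])
  finally show ?thesis by (simp add: algebra_simps)
qed

lemma tele:
  assumes g: "gen x"
  shows "(\<Sum>k=0..N. cc x N k * (-(of_nat N - of_nat k)*(2*x+1+of_nat k)*g (Suc k) - of_nat k*(2*x+of_nat N+of_nat k)*g k)) = 0"
proof -
  define F where "F k = cc x N k * (of_nat k * (2*x + of_nat N + of_nat k) * g k)" for k
  have "(\<Sum>k=0..N. cc x N k * (-(of_nat N - of_nat k)*(2*x+1+of_nat k)*g (Suc k) - of_nat k*(2*x+of_nat N+of_nat k)*g k))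
      = (\<Sum>k=0..N. F (Suc k) - F k)"
  proof (rule sum.cong[OF refl])
    fix k assume "k \<in> {0..N}"
    then show "cc x N k * (-(of_nat N - of_nat k)*(2*x+1+of_nat k)*g (Suc k) - of_nat k*(2*x+of_nat N+of_nat k)*g k) = F (Suc k) - F k"
      unfolding F_def by (intro tele_pt[OF g]) auto
  qed
  also have "\<dots> = F (Suc N) - F 0" by (rule sum_Suc_diff) simp
  also have "\<dots> = 0" unfolding F_def by (simp add: cc_gt)
  finally show ?thesis .
qed

lemma teleH:
  assumes g: "gen x"
  shows "(\<Sum>k=0..N. cc x N k * (-(of_nat N - of_nat k)*(2*x+1+of_nat k)*g (Suc k) - of_nat k*(2*x+of_nat N+of_nat k)*g k) * Hx x k)
    = - (\<Sum>k=0..N. cc x N k * (of_nat k * (2*x + of_nat N + of_nat k) * g k) / (x + of_nat k))"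
proof -
  define F where "F k = cc x N k * (of_nat k * (2*x + of_nat N + of_nat k) * g k)" for k
  define P where "P k = F k * Hx x k" for k
  define Q where "Q k = F k / (x + of_nat k)" for k
  have pt: "cc x N k * (-(of_nat N - of_nat k)*(2*x+1+of_nat k)*g (Suc k) - of_nat k*(2*x+of_nat N+of_nat k)*g k) * Hx x k
     = (P (Suc k) - P k) - (Q (Suc k) - Q k) - Q k" if "k \<le> N" for k
  proof -
    have e1: "cc x N k * (-(of_nat N - of_nat k)*(2*x+1+of_nat k)*g (Suc k) - of_nat k*(2*x+of_nat N+of_nat k)*g k)
      = F (Suc k) - F k" unfolding F_def by (rule tele_pt[OF g that])
    have e2: "P (Suc k) = F (Suc k) * Hx x k + Q (Suc k)"
      unfolding P_def Q_def Hx_Suc by (simp add: algebra_simps)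
    have "cc x N k * (-(of_nat N - of_nat k)*(2*x+1+of_nat k)*g (Suc k) - of_nat k*(2*x+of_nat N+of_nat k)*g k) * Hx x k
       = (F (Suc k) - F k) * Hx x k" by (simp only: e1)
    also have "\<dots> = (P (Suc k) - P k) - (Q (Suc k) - Q k) - Q k" by (simp add: e2 P_def[of k] algebra_simps)
    finally show ?thesis .
  qed
  have "(\<Sum>k=0..N. cc x N k * (-(of_nat N - of_nat k)*(2*x+1+of_nat k)*g (Suc k) - of_nat k*(2*x+of_nat N+of_nat k)*g k) * Hx x k)
     = (\<Sum>k=0..N. (P (Suc k) - P k) - (Q (Suc k) - Q k) - Q k)"
  proof (rule sum.cong[OF refl])
    fix k assume "k \<in> {0..N}"
    then show "cc x N k * (-(of_nat N - of_nat k)*(2*x+1+of_nat k)*g (Suc k) - of_nat k*(2*x+of_nat N+of_nat k)*g k) * Hx x k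
     = (P (Suc k) - P k) - (Q (Suc k) - Q k) - Q k" by (intro pt) auto
  qed
  also have "\<dots> = (\<Sum>k=0..N. P (Suc k) - P k) - (\<Sum>k=0..N. Q (Suc k) - Q k) - (\<Sum>k=0..N. Q k)"
    by (simp only: sum_subtractf)
  also have "(\<Sum>k=0..N. P (Suc k) - P k) = P (Suc N) - P 0" by (rule sum_Suc_diff) simp
  also have "(\<Sum>k=0..N. Q (Suc k) - Q k) = Q (Suc N) - Q 0" by (rule sum_Suc_diff) simp
  also have "P (Suc N) = 0" unfolding P_def F_def by (simp add: cc_gt)
  also have "P 0 = 0" unfolding P_def F_def by simp
  also have "Q (Suc N) = 0" unfolding Q_def F_def by (simp add: cc_gt)
  also have "Q 0 = 0" unfolding Q_def F_def by simp
  finally show ?thesis unfolding Q_def F_def by simp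
qed

definition sS :: "complex \<Rightarrow> nat \<Rightarrow> complex" where "sS x N = (\<Sum>k=0..N. cc x N k)"
definition WW :: "complex \<Rightarrow> nat \<Rightarrow> complex" where "WW x N = (\<Sum>k=0..N. cc x N k * (of_nat k / (x + of_nat k)))"
definition SS :: "complex \<Rightarrow> nat \<Rightarrow> complex" where "SS x N = (\<Sum>k=0..N. cc x N k * Hx x k)"

lemma sum_lin: "(\<Sum>k\<in>S. c k * (A - B * r k) * h k) = A * (\<Sum>k\<in>S. c k * h k) - B * (\<Sum>k\<in>S. c k * r k * h k)"
  for c r h :: "nat \<Rightarrow> complex"
  by (simp add: sum_subtractf sum_distrib_left algebra_simps)

lemma shiftN_sum:
  assumes g: "gen x"
  shows "of_nat (Suc n) * (2*x + of_nat (Suc n)) * (\<Sum>k=0..n. cc x n k * f k)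
    = (\<Sum>k=0..Suc n. cc x (Suc n) k * ((of_nat (Suc n) - of_nat k) * (2*x + of_nat (Suc n) + of_nat k)) * f k)"
proof -
  have "(\<Sum>k=0..n. cc x n k * f k) = (\<Sum>k=0..Suc n. cc x n k * f k)" by (simp add: cc_gt)
  then have "of_nat (Suc n) * (2*x + of_nat (Suc n)) * (\<Sum>k=0..n. cc x n k * f k)
     = (\<Sum>k=0..Suc n. of_nat (Suc n) * (2*x + of_nat (Suc n)) * (cc x n k * f k))"
    by (simp only: sum_distrib_left)
  also have "\<dots> = (\<Sum>k=0..Suc n. cc x (Suc n) k * ((of_nat (Suc n) - of_nat k) * (2*x + of_nat (Suc n) + of_nat k)) * f k)"
  proof (rule sum.cong[OF refl])
    fix k
    have "of_nat (Suc n) * (2*x + of_nat (Suc n)) * (cc x n k * f k)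
       = (cc x n k * (of_nat (Suc n) * (2*x + of_nat (Suc n)))) * f k" by (simp add: mult_ac)
    also have "\<dots> = cc x (Suc n) k * ((of_nat (Suc n) - of_nat k) * (2*x + of_nat (Suc n) + of_nat k)) * f k"
      by (simp only: cc_shift_N[OF g])
    finally show "of_nat (Suc n) * (2*x + of_nat (Suc n)) * (cc x n k * f k) = \<dots>" .
  qed
  finally show ?thesis .
qed

lemma R_s:
  assumes g: "gen x" and n: "1 \<le> n"
  shows "sS x (Suc n) * ((2*x + 2*(of_nat n+1) - 1)*(2*x+2*(of_nat n+1))) = 2*(2*of_nat n+1)*(2*x+(of_nat n+1)) * sS x n"
proof -
  define m :: complex where "m = of_nat n"
  define D where "D = (m+1)*(2*x+2*(m+1)-1)*(2*x+2*(m+1))"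
  define r where "r k = (of_nat (Suc n) - of_nat k) * (2*x + of_nat (Suc n) + of_nat k)" for k :: nat
  have m0: "m \<noteq> 0" using n unfolding m_def by simp
  have N: "of_nat (Suc n) = m + 1" unfolding m_def by simp
  have N1: "(of_nat n + 1::complex) \<noteq> 0" using of_nat_neq_0[of n, where ?'a=complex] by (simp add: add.commute)
  have "(\<Sum>k=0..Suc n. cc x (Suc n) k * (m*D - 2*m*(2*m+1) * r k) * 1)
     = (\<Sum>k=0..Suc n. cc x (Suc n) k * (-(of_nat (Suc n) - of_nat k)*(2*x+1+of_nat k)*((\<lambda>k. (2*m+1)*(1 - of_nat k) - m*(2*x))) (Suc k)
          - of_nat k*(2*x+of_nat (Suc n)+of_nat k)*((\<lambda>k. (2*m+1)*(1 - of_nat k) - m*(2*x))) k))"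
    by (rule sum.cong[OF refl]) (simp add: r_def D_def m_def algebra_simps)
  also have "\<dots> = 0" by (rule tele[OF g])
  finally have "m*D*sS x (Suc n) - 2*m*(2*m+1) * (\<Sum>k=0..Suc n. cc x (Suc n) k * r k * 1) = 0"
    unfolding sum_lin sS_def by simp
  also have "(\<Sum>k=0..Suc n. cc x (Suc n) k * r k * 1) = of_nat (Suc n) * (2*x + of_nat (Suc n)) * sS x n"
    unfolding r_def sS_def using shiftN_sum[OF g, of n "\<lambda>_. 1"] by simp
  finally have "m * ((m+1) * (sS x (Suc n) * ((2*x+2*(m+1)-1)*(2*x+2*(m+1))) - 2*(2*m+1)*(2*x+(m+1)) * sS x n)) = 0"
    unfolding D_def N by (simp add: algebra_simps)
  then have "sS x (Suc n) * ((2*x+2*(m+1)-1)*(2*x+2*(m+1))) - 2*(2*m+1)*(2*x+(m+1)) * sS x n = 0"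
    using m0 N1 by (simp add: m_def del: of_nat_Suc)
  then show ?thesis unfolding m_def by simp
qed

lemma R_W:
  assumes g: "gen x" and N: "1 \<le> N"
  shows "(x + (of_nat N + 1))^2 * WW x (Suc N) = (of_nat N + 1) * (2*x + (of_nat N + 1)) * WW x N"
proof -
  define M where "M = Suc N"
  define r where "r k = (of_nat M - of_nat k) * (2*x + of_nat M + of_nat k)" for k :: nat
  have M1: "of_nat M = (of_nat N + 1 :: complex)" unfolding M_def by simp
  have N0: "(of_nat N :: complex) \<noteq> 0" using N by simp
  have "(\<Sum>k=0..M. cc x M k * (2*of_nat N) * (of_nat k * (x + of_nat k)))
     = (\<Sum>k=0..M. cc x M k * (-(of_nat M - of_nat k)*(2*x+1+of_nat k)*((\<lambda>k. 1 - of_nat k)) (Suc k)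
          - of_nat k*(2*x+of_nat M+of_nat k)*((\<lambda>k. 1 - of_nat k)) k))"
    by (rule sum.cong[OF refl]) (simp add: M1 algebra_simps)
  also have "\<dots> = 0" by (rule tele[OF g])
  moreover have "(\<Sum>k=0..M. cc x M k * (2*of_nat N) * (of_nat k * (x + of_nat k)))
     = (2*of_nat N) * (\<Sum>k=0..M. cc x M k * (of_nat k * (x + of_nat k)))"
    by (simp add: sum_distrib_left algebra_simps)
  ultimately have z: "(\<Sum>k=0..M. cc x M k * (of_nat k * (x + of_nat k))) = 0"
    using N0 by simp
  have sh0: "of_nat (Suc N) * (2*x + of_nat (Suc N)) * (\<Sum>k=0..N. cc x N k * (of_nat k / (x + of_nat k)))
     = (\<Sum>k=0..Suc N. cc x (Suc N) k * ((of_nat (Suc N) - of_nat k) * (2*x + of_nat (Suc N) + of_nat k)) * (of_nat k / (x + of_nat k)))"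
    by (rule shiftN_sum[OF g])
  have sh: "of_nat M * (2*x + of_nat M) * WW x N = (\<Sum>k=0..M. cc x M k * r k * (of_nat k / (x + of_nat k)))"
    using sh0 unfolding WW_def M_def r_def .
  have "(x + of_nat M)^2 * WW x M - of_nat M * (2*x + of_nat M) * WW x N
     = (x + of_nat M)^2 * (\<Sum>k=0..M. cc x M k * (of_nat k / (x + of_nat k))) - 1 * (\<Sum>k=0..M. cc x M k * r k * (of_nat k / (x + of_nat k)))"
    by (simp only: sh WW_def[of x M] mult_1)
  also have "\<dots> = (\<Sum>k=0..M. cc x M k * ((x + of_nat M)^2 - 1 * r k) * (of_nat k / (x + of_nat k)))"
    by (rule sum_lin[symmetric])
  also have "\<dots> = (\<Sum>k=0..M. cc x M k * (of_nat k * (x + of_nat k)))"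
  proof (rule sum.cong[OF refl])
    fix k
    have xk: "x + of_nat k \<noteq> 0" by (rule gen_nz1[OF g])
    have "(x + of_nat M)^2 - r k = (x + of_nat k)^2" unfolding r_def by (simp add: algebra_simps power2_eq_square)
    then show "cc x M k * ((x + of_nat M)^2 - 1 * r k) * (of_nat k / (x + of_nat k)) = cc x M k * (of_nat k * (x + of_nat k))"
      using xk by (simp add: power2_eq_square)
  qed
  also have "\<dots> = 0" by (rule z)
  finally show ?thesis unfolding M_def by (simp add: add.commute)
qed

definition beF :: "complex \<Rightarrow> complex \<Rightarrow> complex" where
  "beF x m = 2*m*m*(2*x)+2*m*(2*m+1)*(x+m)-(2*m+1)^2-(2*m+1)*m*(2*x)"
definition muF :: "complex \<Rightarrow> complex \<Rightarrow> complex" where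
  "muF x m = (m+1)*(2*x+1)*((2*m+1)^2+beF x m)"
definition rhoF :: "complex \<Rightarrow> complex \<Rightarrow> complex" where
  "rhoF x m = 2*m*(2*m+1)*(x+(m+1))*(2*m+1+x)"
definition DF :: "complex \<Rightarrow> complex \<Rightarrow> complex" where
  "DF x m = (m+1)*(2*x+2*(m+1)-1)*(2*x+2*(m+1))"

lemma divlem:
  fixes a P e u B v kk c :: complex
  assumes e: "e \<noteq> 0" and p: "a*P = e*(u+B) + v*kk"
  shows "a*(c*P/e) = u*c + c*B + v*(c*(kk/e))"
proof -
  have "a*(c*P/e) = c*(a*P)/e" by simp
  also have "\<dots> = c*(e*(u+B) + v*kk)/e" by (simp only: p)
  also have "\<dots> = u*c + c*B + v*(c*(kk/e))" using e by (simp add: field_simps)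
  finally show ?thesis .
qed

lemma R_S:
  assumes g: "gen x" and n: "1 \<le> n"
  shows "2*of_nat n*(2*of_nat n+1)*(of_nat n*DF x (of_nat n)*SS x (Suc n)
          - 2*of_nat n*(2*of_nat n+1)*(of_nat n+1)*(2*x+(of_nat n+1))*SS x n)
        = -(muF x (of_nat n)*sS x (Suc n) + rhoF x (of_nat n)*WW x (Suc n))"
proof -
  define m :: complex where "m = of_nat n"
  define D where "D = DF x m"
  define mu where "mu = muF x m"
  define rho where "rho = rhoF x m"
  define H where "H k = (2*m+1)*(1 - of_nat k) - m*(2*x)" for k :: nat
  define g2 where "g2 k = (2*m+1)^2 * of_nat k + beF x m" for k :: nat
  define r where "r k = (of_nat (Suc n) - of_nat k) * (2*x + of_nat (Suc n) + of_nat k)" for k :: nat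
  have br: "-(of_nat (Suc n) - of_nat k)*(2*x+1+of_nat k)*H (Suc k) - of_nat k*(2*x+of_nat (Suc n)+of_nat k)*H k
      = m*D - 2*m*(2*m+1) * r k" for k
    unfolding H_def r_def D_def DF_def m_def by (simp add: algebra_simps)
  have L: "(\<Sum>k=0..Suc n. cc x (Suc n) k * (-(of_nat (Suc n) - of_nat k)*(2*x+1+of_nat k)*H (Suc k) - of_nat k*(2*x+of_nat (Suc n)+of_nat k)*H k) * Hx x k)
     = m*D*SS x (Suc n) - 2*m*(2*m+1)*((m+1)*(2*x+(m+1))*SS x n)"
  proof -
    have "(\<Sum>k=0..Suc n. cc x (Suc n) k * (-(of_nat (Suc n) - of_nat k)*(2*x+1+of_nat k)*H (Suc k) - of_nat k*(2*x+of_nat (Suc n)+of_nat k)*H k) * Hx x k)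
      = (\<Sum>k=0..Suc n. cc x (Suc n) k * (m*D - 2*m*(2*m+1) * r k) * Hx x k)" by (simp only: br)
    also have "\<dots> = m*D*(\<Sum>k=0..Suc n. cc x (Suc n) k * Hx x k) - 2*m*(2*m+1) * (\<Sum>k=0..Suc n. cc x (Suc n) k * r k * Hx x k)"
      by (rule sum_lin)
    also have "(\<Sum>k=0..Suc n. cc x (Suc n) k * r k * Hx x k) = of_nat (Suc n) * (2*x + of_nat (Suc n)) * SS x n"
      unfolding r_def SS_def by (rule shiftN_sum[OF g, symmetric])
    also have "of_nat (Suc n) * (2*x + of_nat (Suc n)) * SS x n = (m+1)*(2*x+(m+1))*SS x n"
      unfolding m_def by (simp add: add.commute)
    finally show ?thesis unfolding SS_def .
  qed
  have R: "2*m*(2*m+1)*(\<Sum>k=0..Suc n. cc x (Suc n) k * (of_nat k * (2*x + of_nat (Suc n) + of_nat k) * H k) / (x + of_nat k))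
     = mu*sS x (Suc n) + rho*WW x (Suc n)"
  proof -
    have pt: "2*m*(2*m+1)*(cc x (Suc n) k * (of_nat k * (2*x + of_nat (Suc n) + of_nat k) * H k) / (x + of_nat k))
      = mu * cc x (Suc n) k + cc x (Suc n) k * (-(of_nat (Suc n) - of_nat k)*(2*x+1+of_nat k)*g2 (Suc k) - of_nat k*(2*x+of_nat (Suc n)+of_nat k)*g2 k)
        + rho * (cc x (Suc n) k * (of_nat k / (x + of_nat k)))" for k
    proof -
      have xk: "x + of_nat k \<noteq> 0" by (rule gen_nz1[OF g])
      have poly: "2*m*(2*m+1)*(of_nat k * (2*x + of_nat (Suc n) + of_nat k) * H k)
        = (x + of_nat k) * (mu + (-(of_nat (Suc n) - of_nat k)*(2*x+1+of_nat k)*g2 (Suc k) - of_nat k*(2*x+of_nat (Suc n)+of_nat k)*g2 k))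
          + rho * of_nat k"
        unfolding H_def g2_def mu_def rho_def muF_def rhoF_def beF_def m_def
        by (simp add: algebra_simps power2_eq_square)
      show ?thesis by (rule divlem[OF xk poly])
    qed
    have "2*m*(2*m+1)*(\<Sum>k=0..Suc n. cc x (Suc n) k * (of_nat k * (2*x + of_nat (Suc n) + of_nat k) * H k) / (x + of_nat k))
       = (\<Sum>k=0..Suc n. 2*m*(2*m+1)*(cc x (Suc n) k * (of_nat k * (2*x + of_nat (Suc n) + of_nat k) * H k) / (x + of_nat k)))"
      by (simp only: sum_distrib_left)
    also have "\<dots> = (\<Sum>k=0..Suc n. mu * cc x (Suc n) k + cc x (Suc n) k * (-(of_nat (Suc n) - of_nat k)*(2*x+1+of_nat k)*g2 (Suc k) - of_nat k*(2*x+of_nat (Suc n)+of_nat k)*g2 k)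
        + rho * (cc x (Suc n) k * (of_nat k / (x + of_nat k))))"
      by (simp only: pt)
    also have "\<dots> = mu * sS x (Suc n) + (\<Sum>k=0..Suc n. cc x (Suc n) k * (-(of_nat (Suc n) - of_nat k)*(2*x+1+of_nat k)*g2 (Suc k) - of_nat k*(2*x+of_nat (Suc n)+of_nat k)*g2 k))
        + rho * WW x (Suc n)"
      unfolding sS_def WW_def by (simp only: sum.distrib sum_distrib_left)
    also have "(\<Sum>k=0..Suc n. cc x (Suc n) k * (-(of_nat (Suc n) - of_nat k)*(2*x+1+of_nat k)*g2 (Suc k) - of_nat k*(2*x+of_nat (Suc n)+of_nat k)*g2 k)) = 0"
      by (rule tele[OF g])
    finally show ?thesis by simp
  qed
  have "2*m*(2*m+1)*(m*D*SS x (Suc n) - 2*m*(2*m+1)*((m+1)*(2*x+(m+1))*SS x n))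
     = 2*m*(2*m+1)*(- (\<Sum>k=0..Suc n. cc x (Suc n) k * (of_nat k * (2*x + of_nat (Suc n) + of_nat k) * H k) / (x + of_nat k)))"
    unfolding L[symmetric] by (simp only: teleH[OF g])
  also have "\<dots> = -(mu*sS x (Suc n) + rho*WW x (Suc n))" by (simp only: mult_minus_right R)
  finally show ?thesis unfolding m_def D_def mu_def rho_def by (simp add: algebra_simps)
qed
lemma fin_step:
  fixes x m SN Sn sN sn WN Wn Hn HN :: complex
  defines "be \<equiv> 2*m*m*(2*x)+2*m*(2*m+1)*(x+m)-(2*m+1)^2-(2*m+1)*m*(2*x)"
  defines "mu \<equiv> (m+1)*(2*x+1)*((2*m+1)^2+be)"
  defines "rho \<equiv> 2*m*(2*m+1)*(x+(m+1))*(2*m+1+x)"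
  defines "D \<equiv> (m+1)*(2*x+2*(m+1)-1)*(2*x+2*(m+1))"
  assumes nz: "m \<noteq> 0" "m+1 \<noteq> 0" "2*m+1 \<noteq> 0" "x+(m+1) \<noteq> 0" "2*x+(m+1) \<noteq> 0" "2*x+2*(m+1)-1 \<noteq> 0"
  assumes IH: "2*m*Sn = m*sn*Hn + Wn"
    and b: "sN*((2*x+2*(m+1)-1)*(2*x+2*(m+1))) = 2*(2*m+1)*(2*x+(m+1))*sn"
    and c: "(x+(m+1))^2*WN = (m+1)*(2*x+(m+1))*Wn"
    and d: "2*m*(2*m+1)*(m*D*SN - 2*m*(2*m+1)*(m+1)*(2*x+(m+1))*Sn) = -(mu*sN + rho*WN)"
    and H: "HN = Hn + dp / ((x+(m+1))*(m+1)*(2*m+1)*(2*m+2))"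
    and dp: "dp = (m+1)*(2*m+1)*(2*m+2) + (x+(m+1))*(2*m+1)*(2*m+2) - 2*(x+(m+1))*(m+1)*(2*m+2) - 2*(x+(m+1))*(m+1)*(2*m+1)"
  shows "2*(m+1)*SN = (m+1)*sN*HN + WN"
proof -
  define P where "P = (2*x+2*(m+1)-1)*(2*x+2*(m+1))"
  define Q where "Q = 2*(2*m+1)*(2*x+(m+1))"
  define R where "R = (x+(m+1))^2"
  define T where "T = (m+1)*(2*x+(m+1))"
  define J where "J = 2*m*(2*m+1)*m*D"
  define K where "K = 2*m*(2*m+1)*2*m*(2*m+1)*(m+1)*(2*x+(m+1))"
  define E where "E = (x+(m+1))*(m+1)*(2*m+1)*(2*m+2)"
  have x2: "2*x+2*(m+1) = 2*(x+(m+1))" by simp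
  have nzm: "m \<noteq> 0" "m+1\<noteq>0" using nz by auto
  have nzm2: "2*(m+1) \<noteq> 0" using nz(2) by (simp only: mult_eq_0_iff) simp
  have nzm3: "2 + m*2 \<noteq> 0" using nzm2 by (simp add: algebra_simps)
  have Q0: "Q \<noteq> 0" unfolding Q_def using nz by (simp only: mult_eq_0_iff power_eq_0_iff de_Morgan_disj) simp
  have T0: "T \<noteq> 0" unfolding T_def using nz by (simp only: mult_eq_0_iff power_eq_0_iff de_Morgan_disj) simp
  have R0: "R \<noteq> 0" unfolding R_def using nz by (simp only: mult_eq_0_iff power_eq_0_iff de_Morgan_disj) simp
  have D0: "D \<noteq> 0" unfolding D_def using nz x2 by (simp only: mult_eq_0_iff de_Morgan_disj x2) simp
  have J0: "J \<noteq> 0" unfolding J_def using nz D0 by (simp only: mult_eq_0_iff de_Morgan_disj) simp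
  have E0: "E \<noteq> 0" unfolding E_def using nz by (simp only: mult_eq_0_iff de_Morgan_disj) (simp add: add_eq_0_iff2)
  have e1: "sn = sN*P/Q" using b Q0 unfolding P_def Q_def by (simp add: field_simps)
  have e2: "Wn = WN*R/T" using c T0 unfolding R_def T_def by (simp add: field_simps)
  have e3: "SN = (K*Sn - mu*sN - rho*WN)/J" using d J0 unfolding J_def K_def
    by (simp add: field_simps)
  have e4: "Sn = (m*sn*Hn + Wn)/(2*m)" using IH nz by (simp add: field_simps)
  have cC: "K*m*P = m*Q*J" unfolding K_def P_def Q_def J_def D_def by (simp add: algebra_simps)
  have cA: "-mu*2*E = J*dp" unfolding J_def E_def dp D_def mu_def be_def by (simp add: algebra_simps power2_eq_square)
  have cB: "2*(m+1)*(K*R - 2*m*T*rho) = 2*m*T*J" unfolding K_def R_def T_def rho_def J_def D_def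
    by (simp add: algebra_simps power2_eq_square)
  have "SN = (K*((m*(sN*P/Q)*Hn + WN*R/T)/(2*m)) - mu*sN - rho*WN)/J" using e3 e4 e1 e2 by simp
  also have "\<dots> = sN*Hn*(K*m*P/(2*m*Q*J)) + sN*(-mu/J) + WN*((K*R - 2*m*T*rho)/(2*m*T*J))"
    using Q0 T0 J0 nzm nzm2 nzm3 by (simp add: field_simps)
  also have "K*m*P/(2*m*Q*J) = 1/2" using cC Q0 J0 nzm nzm2 nzm3 by (simp add: field_simps)
  also have "-mu/J = dp/(2*E)" using cA J0 E0 by (simp add: field_simps)
  also have "(K*R - 2*m*T*rho)/(2*m*T*J) = 1/(2*(m+1))" using cB T0 J0 nzm nzm2 nzm3 by (simp add: field_simps)
  finally have "SN = sN*Hn/2 + sN*(dp/(2*E)) + WN/(2*(m+1))" by simp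
  then have "2*(m+1)*SN = (m+1)*sN*(Hn + dp/E) + (2*(m+1))*(WN/(2*(m+1)))"
    using E0 by (simp add: algebra_simps add_divide_distrib[symmetric]) (simp add: field_simps)
  also have "(2*(m+1))*(WN/(2*(m+1))) = WN" using nzm2 by simp
  finally show ?thesis using H unfolding E_def by simp
qed

lemma frac4:
  fixes a b c d :: complex
  assumes "a \<noteq> 0" "b \<noteq> 0" "c \<noteq> 0" "d \<noteq> 0"
  shows "1/a + 1/b - 2/c - 2/d = (b*c*d + a*c*d - 2*a*b*d - 2*a*b*c)/(a*b*c*d)"
  using assms by (simp add: field_simps)

lemma base_lem:
  fixes a c :: complex
  assumes "a \<noteq> 0" "c = -(2*a-1)/(2*a)"
  shows "2*1*(c*(1/a)) = 1*(1+c)*(1/a - 2) + c*(1/a)"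
  using assms by (simp add: field_simps)

lemma main_gen:
  assumes g: "gen x" and n: "1 \<le> n"
  shows "2*of_nat n*SS x n = of_nat n * sS x n * (Hx x n + Hx 0 n - 2*Hx 0 (2*n)) + WW x n"
  using n
proof (induction n rule: nat_induct_at_least)
  case base
  have x1: "x + 1 \<noteq> 0" using gen_nz1[OF g, of 1] by simp
  have x2: "2*x + 2 \<noteq> 0" using gen_nz2[OF g, of 2] by simp
  have c11: "cc x 1 1 = -(2*x+1)/(2*x+2)"
    unfolding cc_def by (simp add: add_ac)
  have S1: "SS x 1 = cc x 1 1 * (1/(x+1))" unfolding SS_def Hx_def by (simp add: add_ac)
  have s1: "sS x 1 = 1 + cc x 1 1" unfolding sS_def by (simp add: cc_def)
  have W1: "WW x 1 = cc x 1 1 * (1/(x+1))" unfolding WW_def by (simp add: add_ac)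
  have H: "Hx x 1 + Hx 0 1 - 2*Hx 0 (2*1) = 1/(x+1) - 2"
    unfolding Hx_def by (simp add: numeral_2_eq_2 add_ac)
  have x2': "2*x + 2 = 2*(x+1)" by simp
  have c11': "cc x 1 1 = -(2*(x+1)-1)/(2*(x+1))" using c11 by (simp add: algebra_simps)
  have "2*1*(cc x 1 1*(1/(x+1))) = 1*(1+cc x 1 1)*(1/(x+1) - 2) + cc x 1 1*(1/(x+1))"
    by (rule base_lem[OF x1 c11'])
  then show ?case unfolding S1 s1 W1 H by simp
next
  case (Suc n)
  define m :: complex where "m = of_nat n"
  have n1: "1 \<le> n" using Suc.hyps .
  have m0: "m \<noteq> 0" using n1 unfolding m_def by simp
  have m1: "m + 1 \<noteq> 0" unfolding m_def using of_nat_neq_0[of n, where ?'a=complex] by (simp add: add.commute)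
  have m2: "2*m + 1 \<noteq> 0" unfolding m_def using of_nat_neq_0[of "2*n", where ?'a=complex] by (simp add: add.commute)
  have m3: "2*m + 2 \<noteq> 0" unfolding m_def using of_nat_neq_0[of "2*n+1", where ?'a=complex] by (simp add: add.commute add.assoc)
  have xm: "x + (m+1) \<noteq> 0" unfolding m_def using gen_nz1[OF g, of "Suc n"] by (simp add: add.commute)
  have ym: "2*x + (m+1) \<noteq> 0" unfolding m_def using gen_nz2[OF g, of "Suc n"] by (simp add: add.commute)
  have ym2: "2*x + 2*(m+1) - 1 \<noteq> 0" unfolding m_def using gen_nz2[OF g, of "2*n+1"] by (simp add: algebra_simps)
  have h1: "Hx x (Suc n) = Hx x n + 1/(x + (m+1))" unfolding m_def Hx_Suc by (simp add: add.commute)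
  have h2: "Hx 0 (Suc n) = Hx 0 n + 1/(m+1)" unfolding m_def Hx_Suc by (simp add: add.commute)
  have h3: "Hx 0 (2*Suc n) = Hx 0 (2*n) + 1/(2*m+1) + 1/(2*m+2)"
  proof -
    have "2*Suc n = Suc (Suc (2*n))" by simp
    then show ?thesis unfolding m_def by (simp only: Hx_Suc) (simp add: add_ac)
  qed
  define dp where "dp = (m+1)*(2*m+1)*(2*m+2) + (x+(m+1))*(2*m+1)*(2*m+2) - 2*(x+(m+1))*(m+1)*(2*m+2) - 2*(x+(m+1))*(m+1)*(2*m+1)"
  have HH: "Hx x (Suc n) + Hx 0 (Suc n) - 2*Hx 0 (2*Suc n) = (Hx x n + Hx 0 n - 2*Hx 0 (2*n)) + dp / ((x+(m+1))*(m+1)*(2*m+1)*(2*m+2))"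
  proof -
    have "Hx x (Suc n) + Hx 0 (Suc n) - 2*Hx 0 (2*Suc n) = (Hx x n + Hx 0 n - 2*Hx 0 (2*n)) + (1/(x + (m+1)) + 1/(m+1) - 2/(2*m+1) - 2/(2*m+2))"
      unfolding h1 h2 h3 by (simp add: algebra_simps)
    also have "1/(x + (m+1)) + 1/(m+1) - 2/(2*m+1) - 2/(2*m+2) = dp / ((x+(m+1))*(m+1)*(2*m+1)*(2*m+2))"
      unfolding dp_def by (rule frac4[OF xm m1 m2 m3])
    finally show ?thesis .
  qed
  have IH: "2*m*SS x n = m * sS x n * (Hx x n + Hx 0 n - 2*Hx 0 (2*n)) + WW x n" using Suc.IH unfolding m_def .
  have b: "sS x (Suc n) * ((2*x + 2*(m+1) - 1)*(2*x+2*(m+1))) = 2*(2*m+1)*(2*x+(m+1)) * sS x n"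
    using R_s[OF g n1] unfolding m_def .
  have c: "(x + (m+1))^2 * WW x (Suc n) = (m+1) * (2*x + (m+1)) * WW x n"
    using R_W[OF g n1] unfolding m_def .
  have d: "2*m*(2*m+1)*(m*((m+1)*(2*x+2*(m+1)-1)*(2*x+2*(m+1)))*SS x (Suc n)
          - 2*m*(2*m+1)*(m+1)*(2*x+(m+1))*SS x n)
        = -(((m+1)*(2*x+1)*((2*m+1)^2+(2*m*m*(2*x)+2*m*(2*m+1)*(x+m)-(2*m+1)^2-(2*m+1)*m*(2*x))))*sS x (Suc n)
            + (2*m*(2*m+1)*(x+(m+1))*(2*m+1+x))*WW x (Suc n))"
    using R_S[OF g n1] unfolding m_def DF_def muF_def rhoF_def beF_def .
  have "2*(m+1)*SS x (Suc n) = (m+1)*sS x (Suc n)*(Hx x (Suc n) + Hx 0 (Suc n) - 2*Hx 0 (2*Suc n)) + WW x (Suc n)"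
    by (rule fin_step[OF m0 m1 m2 xm ym ym2 IH b c d HH dp_def])
  then show ?case unfolding m_def by (simp add: add.commute)
qed

lemma cf_s_alg:
  fixes x m F p A B :: complex
  assumes A: "A \<noteq> 0" and B: "B \<noteq> 0" and e1: "2*x+m+1 \<noteq> 0" and e2: "x+m+1 \<noteq> 0"
    and rel: "B*(2*x+m+1) = A*(2*x+2*m+1)"
  shows "2*(4*F)*(p*(1/2+m))/(B*(2*x+2*m+2)) * ((2*x + 2*(m+1) - 1)*(2*x+2*(m+1)))
       = 2*(2*m+1)*(2*x+(m+1)) * (2*F*p/A)"
proof -
  define a where "a = 2*x+m+1"
  define b where "b = 2*x+2*m+1"
  define c where "c = x+m+1"
  define d where "d = 2*m+1"
  have r1: "1/2+m = d/2" "2*x+2*m+2 = 2*c" "2*x+2*(m+1)-1 = b" "2*x+2*(m+1) = 2*c" "2*m+1 = d" "2*x+(m+1) = a"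
    unfolding a_def b_def c_def d_def by (simp_all add: algebra_simps)
  have a0: "a \<noteq> 0" using e1 a_def by simp
  have c0: "c \<noteq> 0" using e2 c_def by simp
  have rel': "B*a = A*b" using rel unfolding a_def b_def .
  have B': "B = A*b/a" using rel' a0 by (simp add: field_simps)
  have b0: "b \<noteq> 0" using rel' A B a0 by auto
  have bc: "b = 2*c - 1" unfolding b_def c_def by (simp add: algebra_simps)
  show ?thesis unfolding r1 B' using A a0 b0 c0 by (simp add: field_simps) (simp add: bc algebra_simps)
qed

lemma cf_W_alg:
  fixes x m F f pX pY A B :: complex
  assumes A: "A \<noteq> 0" and B: "B \<noteq> 0" and e1: "2*x+m+1 \<noteq> 0" and e2: "x+m+1 \<noteq> 0" and pY: "pY \<noteq> 0"
    and rel: "B*(2*x+m+1) = A*(2*x+2*m+1)"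
  shows "(x + (m+1))^2 * (-2*(4*F)*((m+1)*f)*(pX*(x+1/2+m))/((B*(2*x+2*m+2))*(pY*(x+1+m))))
       = (m+1) * (2*x + (m+1)) * (-2*F*f*pX/(A*pY))"
proof -
  define a where "a = 2*x+m+1"
  define b where "b = 2*x+2*m+1"
  define c where "c = x+m+1"
  define N where "N = m+1"
  have r1: "x+(m+1) = c" "x+1/2+m = b/2" "2*x+2*m+2 = 2*c" "x+1+m = c" "2*x+(m+1) = a" "m+1 = N"
    unfolding a_def b_def c_def N_def by (simp_all add: algebra_simps)
  have a0: "a \<noteq> 0" using e1 a_def by simp
  have c0: "c \<noteq> 0" using e2 c_def by simp
  have rel': "B*a = A*b" using rel unfolding a_def b_def .
  have B': "B = A*b/a" using rel' a0 by (simp add: field_simps)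
  have b0: "b \<noteq> 0" using rel' A B a0 by auto
  have ac: "a = 2*x + N" "c = x + N" unfolding a_def c_def N_def by (simp_all add: algebra_simps)
  show ?thesis unfolding r1 B' using A a0 b0 c0 pY by (simp add: field_simps power2_eq_square) (simp add: ac algebra_simps)
qed

lemma cc11: "cc x 1 1 = -(2*x+1)/(2*x+2)"
  unfolding cc_def by (simp add: add_ac)

lemma poch_rel:
  fixes x :: complex
  shows "pochhammer (2*x + of_nat (Suc n) + 1) n * (2*x + of_nat n + 1) = pochhammer (2*x + of_nat n + 1) n * (2*x + 2*of_nat n + 1)"
proof -
  have e: "2*x + of_nat (Suc n) + 1 = 2*x + of_nat n + 1 + 1" by (simp add: add_ac)
  have h: "pochhammer (2*x + of_nat n + 1) n * (2*x + of_nat n + 1 + of_nat n) = (2*x + of_nat n + 1) * pochhammer (2*x + of_nat n + 1 + 1) n"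
    by (rule poch_shift)
  have h': "pochhammer (2*x + of_nat n + 1) n * (2*x + of_nat n + 1 + of_nat n) = (2*x + of_nat n + 1) * pochhammer (2*x + of_nat (Suc n) + 1) n"
    using h by (simp only: e)
  have "pochhammer (2*x + of_nat (Suc n) + 1) n * (2*x + of_nat n + 1) = (2*x + of_nat n + 1) * pochhammer (2*x + of_nat (Suc n) + 1) n"
    by (rule mult.commute)
  also have "\<dots> = pochhammer (2*x + of_nat n + 1) n * (2*x + of_nat n + 1 + of_nat n)" by (rule h'[symmetric])
  also have "2*x + of_nat n + 1 + of_nat n = 2*x + 2*of_nat n + 1" by simp
  finally show ?thesis .
qed

lemma wbase: "(a::complex) \<noteq> 0 \<Longrightarrow> -(2*a-1)/(2*a) * (1/a) = -2*(a-1/2)/((2*a)*a)"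
  by (simp add: field_simps)

lemma sS_closed:
  assumes g: "gen x" and n: "1 \<le> n"
  shows "sS x n = 2*4^(n-1)*pochhammer (1/2) n / pochhammer (2*x + of_nat n + 1) n"
  using n
proof (induction n rule: nat_induct_at_least)
  case base
  have x2: "2*x + 2 \<noteq> 0" using gen_nz2[OF g, of 2] by simp
  have "sS x 1 = 1 + cc x 1 1" unfolding sS_def by (simp add: cc_def)
  also have "\<dots> = 1/(2*x+2)" unfolding cc11 using x2 by (simp add: field_simps)
  finally show ?case by (simp add: add_ac)
next
  case (Suc n)
  define m :: complex where "m = of_nat n"
  define A where "A = pochhammer (2*x + of_nat n + 1) n"
  define B where "B = pochhammer (2*x + of_nat (Suc n) + 1) n"
  define p where "p = pochhammer (1/2::complex) n"
  define F :: complex where "F = 4^(n-1)"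
  have n1: "1 \<le> n" using Suc.hyps .
  have A0: "A \<noteq> 0" unfolding A_def by (rule pochN_nz[OF g])
  have B0: "B \<noteq> 0" unfolding B_def by (rule pochN_nz[OF g])
  have e1: "2*x+m+1 \<noteq> 0" unfolding m_def using gen_nz2[OF g, of "n+1"] by (simp add: add_ac)
  have e2: "x+m+1 \<noteq> 0" unfolding m_def using gen_nz1[OF g, of "n+1"] by (simp add: add_ac)
  have P0: "(2*x + 2*(m+1) - 1)*(2*x+2*(m+1)) \<noteq> 0"
  proof -
    have a: "2*x + 2*(m+1) - 1 \<noteq> 0" using gen_nz2[OF g, of "2*n+1"] unfolding m_def by (simp add: algebra_simps)
    have b: "2*x + 2*(m+1) \<noteq> 0" using gen_nz2[OF g, of "2*n+2"] unfolding m_def by (simp add: algebra_simps)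
    show ?thesis using a b by (simp only: mult_eq_0_iff de_Morgan_disj) simp
  qed
  have rel: "B*(2*x+m+1) = A*(2*x+2*m+1)" unfolding A_def B_def m_def using poch_rel by simp
  have IH: "sS x n = 2*F*p/A" using Suc.IH unfolding F_def p_def A_def by simp
  have four: "(4::complex)^(Suc n - 1) = 4*F" unfolding F_def using n1 by (cases n) simp_all
  have cl: "2*4^(Suc n - 1)*pochhammer (1/2) (Suc n) / pochhammer (2*x + of_nat (Suc n) + 1) (Suc n)
      = 2*(4*F)*(p*(1/2+m))/(B*(2*x+2*m+2))"
    unfolding four pochhammer_Suc p_def B_def m_def by (simp add: algebra_simps)
  have "sS x (Suc n) * ((2*x + 2*(m+1) - 1)*(2*x+2*(m+1))) = 2*(2*m+1)*(2*x+(m+1)) * sS x n"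
    using R_s[OF g n1] unfolding m_def .
  also have "\<dots> = 2*(4*F)*(p*(1/2+m))/(B*(2*x+2*m+2)) * ((2*x + 2*(m+1) - 1)*(2*x+2*(m+1)))"
    unfolding IH by (rule cf_s_alg[OF A0 B0 e1 e2 rel, symmetric])
  finally have "sS x (Suc n) = 2*(4*F)*(p*(1/2+m))/(B*(2*x+2*m+2))"
    using mult_right_cancel[OF P0] by blast
  then show ?case unfolding cl .
qed

lemma WW_closed:
  assumes g: "gen x" and n: "1 \<le> n"
  shows "WW x n = -2*4^(n-1)*fact n*pochhammer (x+1/2) n / (pochhammer (2*x + of_nat n + 1) n * pochhammer (x+1) n)"
  using n
proof (induction n rule: nat_induct_at_least)
  case base
  have x1: "x + 1 \<noteq> 0" using gen_nz1[OF g, of 1] by simp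
  have x2: "2*x + 2 = 2*(x+1)" by simp
  have "WW x 1 = cc x 1 1 * (1/(x+1))" unfolding WW_def by (simp add: add_ac)
  also have "\<dots> = -(2*(x+1)-1)/(2*(x+1)) * (1/(x+1))" unfolding cc11 by (simp add: algebra_simps)
  also have "\<dots> = -2*((x+1)-1/2)/((2*(x+1))*(x+1))" by (rule wbase[OF x1])
  also have "\<dots> = -2*(x+1/2)/((2*x+2)*(x+1))" by (simp add: algebra_simps)
  finally show ?case by (simp add: add_ac)
next
  case (Suc n)
  define m :: complex where "m = of_nat n"
  define A where "A = pochhammer (2*x + of_nat n + 1) n"
  define B where "B = pochhammer (2*x + of_nat (Suc n) + 1) n"
  define pX where "pX = pochhammer (x+1/2) n"
  define pY where "pY = pochhammer (x+1) n"
  define f :: complex where "f = fact n"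
  define F :: complex where "F = 4^(n-1)"
  have n1: "1 \<le> n" using Suc.hyps .
  have A0: "A \<noteq> 0" unfolding A_def by (rule pochN_nz[OF g])
  have B0: "B \<noteq> 0" unfolding B_def by (rule pochN_nz[OF g])
  have pY0: "pY \<noteq> 0" unfolding pY_def
  proof
    assume "pochhammer (x+1) n = 0"
    then obtain j where "x + 1 = - of_nat j" using pochhammer_eq_0_iff[of "x+1" n] by blast
    then have "x + of_nat (Suc j) = 0" by (simp add: add_ac eq_neg_iff_add_eq_0)
    with gen_nz1[OF g] show False by blast
  qed
  have e1: "2*x+m+1 \<noteq> 0" unfolding m_def using gen_nz2[OF g, of "n+1"] by (simp add: add_ac)
  have e2: "x+m+1 \<noteq> 0" unfolding m_def using gen_nz1[OF g, of "n+1"] by (simp add: add_ac)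
  have R0: "(x + (m+1))^2 \<noteq> 0" using e2 by (simp add: add.assoc)
  have rel: "B*(2*x+m+1) = A*(2*x+2*m+1)" unfolding A_def B_def m_def using poch_rel by simp
  have IH: "WW x n = -2*F*f*pX/(A*pY)" using Suc.IH unfolding F_def f_def pX_def A_def pY_def by simp
  have four: "(4::complex)^(Suc n - 1) = 4*F" unfolding F_def using n1 by (cases n) simp_all
  have cl: "-2*4^(Suc n - 1)*fact (Suc n)*pochhammer (x+1/2) (Suc n) / (pochhammer (2*x + of_nat (Suc n) + 1) (Suc n) * pochhammer (x+1) (Suc n))
      = -2*(4*F)*((m+1)*f)*(pX*(x+1/2+m))/((B*(2*x+2*m+2))*(pY*(x+1+m)))"
    unfolding four pochhammer_Suc pX_def pY_def B_def m_def f_def fact_Suc by (simp add: algebra_simps)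
  have "(x + (m+1))^2 * WW x (Suc n) = (m+1) * (2*x + (m+1)) * WW x n"
    using R_W[OF g n1] unfolding m_def .
  also have "\<dots> = (x + (m+1))^2 * (-2*(4*F)*((m+1)*f)*(pX*(x+1/2+m))/((B*(2*x+2*m+2))*(pY*(x+1+m))))"
    unfolding IH by (rule cf_W_alg[OF A0 B0 e1 e2 pY0 rel, symmetric])
  finally have "WW x (Suc n) = -2*(4*F)*((m+1)*f)*(pX*(x+1/2+m))/((B*(2*x+2*m+2))*(pY*(x+1+m)))"
    using mult_left_cancel[OF R0] by blast
  then show ?case unfolding cl .
qed

lemma final_alg:
  fixes F p A f pX pY nn Hn SSv :: complex
  assumes A: "A \<noteq> 0" and pY: "pY \<noteq> 0" and f: "f \<noteq> 0" and nn: "nn \<noteq> 0"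
    and h: "2*nn*SSv = nn*(2*F*p/A)*Hn + (-2*F*f*pX/(A*pY))"
  shows "SSv = F*(p/f)/(A/f)*Hn - F/nn*(pX/f)/((A/f)*(pY/f))"
proof -
  have "SSv = (nn*(2*F*p/A)*Hn + (-2*F*f*pX/(A*pY)))/(2*nn)" using h nn by (simp add: field_simps)
  also have "\<dots> = F*(p/f)/(A/f)*Hn - F/nn*(pX/f)/((A/f)*(pY/f))" using A pY f nn by (simp add: field_simps)
  finally show ?thesis .
qed

lemma divdiv: "(f::complex) \<noteq> 0 \<Longrightarrow> a * (p/f) / (q/f) * h = a * p / q * h"
  by (cases "q = 0") (simp_all add: field_simps)

lemma theorem_gen:
  fixes n :: nat and x :: complex
  assumes n: "n \<ge> 1" and g: "gen x"
  shows "(\<Sum>k=0..n. (-1)^k * of_nat (n choose k)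
            * ((2*x + of_nat k) gchoose k) / ((2*x + of_nat n + of_nat k) gchoose k) * Hx x k)
       = 4^(n-1) * ((of_nat n - 1/2) gchoose n) / ((2*x + 2 * of_nat n) gchoose n)
            * (Hx x n + Hx 0 n - 2 * Hx 0 (2*n))
         - 4^(n-1) / of_nat n * ((x + of_nat n - 1/2) gchoose n)
            / (((2*x + 2 * of_nat n) gchoose n) * ((x + of_nat n) gchoose n))"
proof -
  have L: "(\<Sum>k=0..n. (-1)^k * of_nat (n choose k)
            * ((2*x + of_nat k) gchoose k) / ((2*x + of_nat n + of_nat k) gchoose k) * Hx x k) = SS x n"
    unfolding SS_def
  proof (rule sum.cong[OF refl])
    fix k
    have g1: "(2*x + of_nat k) gchoose k = pochhammer (2*x+1) k / fact k"
      by (simp add: gbinomial_pochhammer')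
    have g2: "(2*x + of_nat n + of_nat k) gchoose k = pochhammer (2*x + of_nat n + 1) k / fact k"
      by (simp add: gbinomial_pochhammer')
    show "(-1)^k * of_nat (n choose k) * ((2*x + of_nat k) gchoose k) / ((2*x + of_nat n + of_nat k) gchoose k) * Hx x k
        = cc x n k * Hx x k"
      unfolding g1 g2 cc_def by (rule divdiv) simp
  qed
  define A where "A = pochhammer (2*x + of_nat n + 1) n"
  define p where "p = pochhammer (1/2::complex) n"
  define pX where "pX = pochhammer (x+1/2) n"
  define pY where "pY = pochhammer (x+1) n"
  define f :: complex where "f = fact n"
  define F :: complex where "F = 4^(n-1)"
  have G1: "(of_nat n - 1/2) gchoose n = p / f" unfolding p_def f_def by (simp add: gbinomial_pochhammer')
  have G2: "(2*x + 2*of_nat n) gchoose n = A / f" unfolding A_def f_def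
    by (simp add: gbinomial_pochhammer' algebra_simps)
  have G3: "(x + of_nat n - 1/2) gchoose n = pX / f" unfolding pX_def f_def
    by (simp add: gbinomial_pochhammer' algebra_simps)
  have G4: "(x + of_nat n) gchoose n = pY / f" unfolding pY_def f_def
    by (simp add: gbinomial_pochhammer' algebra_simps)
  have A0: "A \<noteq> 0" unfolding A_def by (rule pochN_nz[OF g])
  have pY0: "pY \<noteq> 0" unfolding pY_def
  proof
    assume "pochhammer (x+1) n = 0"
    then obtain j where "x + 1 = - of_nat j" using pochhammer_eq_0_iff[of "x+1" n] by blast
    then have "x + of_nat (Suc j) = 0" by (simp add: add_ac eq_neg_iff_add_eq_0)
    with gen_nz1[OF g] show False by blast
  qed
  have f0: "f \<noteq> 0" unfolding f_def by simp
  have n0: "(of_nat n :: complex) \<noteq> 0" using n by simp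
  have M: "2*of_nat n*SS x n = of_nat n * (2*F*p/A) * (Hx x n + Hx 0 n - 2*Hx 0 (2*n)) + (-2*F*f*pX/(A*pY))"
    using main_gen[OF g n] sS_closed[OF g n] WW_closed[OF g n] unfolding A_def p_def pX_def pY_def f_def F_def
    by simp
  show ?thesis unfolding L G1 G2 G3 G4 F_def[symmetric]
    by (rule final_alg[OF A0 pY0 f0 n0 M])
qed

lemma isCont_gchoose [continuous_intros]:
  fixes g :: "complex \<Rightarrow> complex"
  assumes "isCont g x"
  shows "isCont (\<lambda>z. g z gchoose k) x"
  unfolding gbinomial_prod_rev using assms by (intro continuous_intros) auto

theorem theorem3:
  fixes n :: nat and x :: complex
  assumes "n \<ge> 1"
    and "\<And>j. 1 \<le> j \<Longrightarrow> j \<le> n \<Longrightarrow> x + of_nat j \<noteq> 0"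
    and "\<And>k. k \<le> n \<Longrightarrow> (2*x + of_nat n + of_nat k) gchoose k \<noteq> 0"
    and "(2*x + 2 * of_nat n) gchoose n \<noteq> 0"
    and "(x + of_nat n) gchoose n \<noteq> 0"
  shows "(\<Sum>k=0..n. (-1)^k * of_nat (n choose k)
            * ((2*x + of_nat k) gchoose k) / ((2*x + of_nat n + of_nat k) gchoose k) * Hx x k)
       = 4^(n-1) * ((of_nat n - 1/2) gchoose n) / ((2*x + 2 * of_nat n) gchoose n)
            * (Hx x n + Hx 0 n - 2 * Hx 0 (2*n))
         - 4^(n-1) / of_nat n * ((x + of_nat n - 1/2) gchoose n)
            / (((2*x + 2 * of_nat n) gchoose n) * ((x + of_nat n) gchoose n))"
proof (cases "gen x")
  case True
  then show ?thesis using theorem_gen[OF assms(1)] by blast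
next
  case False
  define L where "L z = (\<Sum>k=0..n. (-1)^k * of_nat (n choose k)
            * ((2*z + of_nat k) gchoose k) / ((2*z + of_nat n + of_nat k) gchoose k) * Hx z k)" for z
  define R where "R z = 4^(n-1) * ((of_nat n - 1/2) gchoose n) / ((2*z + 2 * of_nat n) gchoose n)
            * (Hx z n + Hx 0 n - 2 * Hx 0 (2*n))
         - 4^(n-1) / of_nat n * ((z + of_nat n - 1/2) gchoose n)
            / (((2*z + 2 * of_nat n) gchoose n) * ((z + of_nat n) gchoose n))" for z
  from False obtain m :: int where m: "2*x = of_int m" unfolding gen_def by blast
  have imx: "Im x = 0"
  proof -
    have "Im (2*x) = 0" unfolding m by simp
    then show ?thesis by simp
  qed
  define zs where "zs j = x + \<i> * of_real (1 / real (Suc j))" for j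
  have gz: "gen (zs j)" for j
    unfolding gen_def
  proof
    fix m' :: int
    show "2 * zs j \<noteq> of_int m'"
    proof
      assume "2 * zs j = of_int m'"
      then have "Im (2 * zs j) = 0" by simp
      then show False unfolding zs_def using imx by simp
    qed
  qed
  have lim: "zs \<longlonglongrightarrow> x"
  proof -
    have "(\<lambda>j. 1 / real (Suc j)) \<longlonglongrightarrow> 0" by (rule LIMSEQ_Suc[OF lim_inverse_n'])
    then have "(\<lambda>j. x + \<i> * of_real (1 / real (Suc j))) \<longlonglongrightarrow> x + \<i> * of_real 0"
      by (intro tendsto_intros)
    then show ?thesis unfolding zs_def by simp
  qed
  have cL: "isCont L x"
    unfolding L_def[abs_def] Hx_def using assms(2,3) by (intro continuous_intros) auto
  have cR: "isCont R x"
    unfolding R_def[abs_def] Hx_def using assms(1,2,4,5) by (intro continuous_intros) auto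
  have eq: "L (zs j) = R (zs j)" for j
    unfolding L_def R_def by (rule theorem_gen[OF assms(1) gz])
  have t1: "(\<lambda>j. L (zs j)) \<longlonglongrightarrow> L x" by (rule isCont_tendsto_compose[OF cL lim])
  have t2: "(\<lambda>j. L (zs j)) \<longlonglongrightarrow> R x" unfolding eq by (rule isCont_tendsto_compose[OF cR lim])
  have "L x = R x" using t1 t2 by (rule LIMSEQ_unique)
  then show ?thesis unfolding L_def R_def .
qed

end
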